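(* Let $\ell,m$ be integers with $1\le\ell<m$ and let $I=\{\ell,m\}$. Then every complex root of $d(I;z)$ lies in the union of the discs $\mathcal D_k=\{z\in\mathbb C\mid |z-k|\le m\}$ for $k=0,1,\dots,m-1$.
   Context: $d(I;z)$ is the descent polynomial: the unique polynomial whose value at each integer $n>\max(I\cup\{0\})$ is the number of permutations $\pi\in\mathfrak S_n$ with $\{j\mid\pi_j>\pi_{j+1}\}=I$, evaluated at complex $z$. *)

theory Defs
  imports "HOL-Analysis.Analysis" "HOL-Combinatorics.Permutations"
          "HOL-Computational_Algebra.Polynomial"
begin

definition descent_set :: "nat \<Rightarrow> (nat \<Rightarrow> nat) \<Rightarrow> nat set" where
  "descent_set n \<pi> = {j. 1 \<le> j \<and> j < n \<and> \<pi> j > \<pi> (Suc j)}"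

definition descent_count :: "nat set \<Rightarrow> nat \<Rightarrow> nat" where
  "descent_count I n = card {\<pi>. \<pi> permutes {1..n} \<and> descent_set n \<pi> = I}"

definition descent_poly :: "nat set \<Rightarrow> complex poly" where
  "descent_poly I = (THE p. \<forall>n. n > Max (I \<union> {0}) \<longrightarrow>
        poly p (of_nat n) = of_nat (descent_count I n))"

end

theory Submission
  imports Defs
begin

definition Lst :: "nat \<Rightarrow> nat set \<Rightarrow> nat set \<Rightarrow> nat list" where
  "Lst n A B = sorted_list_of_set A @ sorted_list_of_set B @ sorted_list_of_set ({1..n} - A - B)"

definition gperm :: "nat \<Rightarrow> nat set \<Rightarrow> nat set \<Rightarrow> nat \<Rightarrow> nat" where
  "gperm n A B = (\<lambda>j. if 1 \<le> j \<and> j \<le> n then Lst n A B ! (j - 1) else j)"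

definition PS :: "nat \<Rightarrow> nat \<Rightarrow> nat \<Rightarrow> (nat set \<times> nat set) set" where
  "PS n a b = {(A,B). A \<subseteq> {1..n} \<and> card A = a \<and> B \<subseteq> {1..n} - A \<and> card B = b - a}"

definition TS :: "nat \<Rightarrow> nat \<Rightarrow> nat \<Rightarrow> (nat \<Rightarrow> nat) set" where
  "TS n a b = {\<pi>. \<pi> permutes {1..n} \<and> descent_set n \<pi> \<subseteq> {a,b}}"

lemma Lst_facts:
  assumes ab: "a \<le> b" "b \<le> n" and AB: "(A,B) \<in> PS n a b"
  shows "length (Lst n A B) = n" "distinct (Lst n A B)" "set (Lst n A B) = {1..n}"
    "\<And>i. i < a \<Longrightarrow> Lst n A B ! i = sorted_list_of_set A ! i"
    "\<And>i. a \<le> i \<Longrightarrow> i < b \<Longrightarrow> Lst n A B ! i = sorted_list_of_set B ! (i - a)"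
    "\<And>i. b \<le> i \<Longrightarrow> i < n \<Longrightarrow> Lst n A B ! i = sorted_list_of_set ({1..n} - A - B) ! (i - b)"
    "length (sorted_list_of_set A) = a" "length (sorted_list_of_set B) = b - a"
    "length (sorted_list_of_set ({1..n} - A - B)) = n - b"
proof -
  have A: "A \<subseteq> {1..n}" "card A = a" and B: "B \<subseteq> {1..n} - A" "card B = b - a"
    using AB by (auto simp: PS_def)
  have fA: "finite A" using A finite_subset[OF _ finite_atLeastAtMost] by auto
  have fB: "finite B" by (rule finite_subset[of _ "{1..n}"]) (use B in auto)
  have cC: "card ({1..n} - A - B) = n - b"
  proof -
    have "card ({1..n} - A - B) = card ({1..n} - A) - card B"
      using B fB by (simp add: card_Diff_subset)
    also have "card ({1..n} - A) = n - a" using A fA by (simp add: card_Diff_subset)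
    finally show ?thesis using B ab by simp
  qed
  show lA: "length (sorted_list_of_set A) = a" using A by simp
  show lB: "length (sorted_list_of_set B) = b - a" using B by simp
  show lC: "length (sorted_list_of_set ({1..n} - A - B)) = n - b" using cC by simp
  show "length (Lst n A B) = n" using lA lB lC ab by (simp add: Lst_def)
  show "distinct (Lst n A B)" using fA fB B by (auto simp: Lst_def)
  show "set (Lst n A B) = {1..n}" using fA fB A B by (auto simp: Lst_def)
  show "\<And>i. i < a \<Longrightarrow> Lst n A B ! i = sorted_list_of_set A ! i"
    using lA by (simp add: Lst_def nth_append)
  show "\<And>i. a \<le> i \<Longrightarrow> i < b \<Longrightarrow> Lst n A B ! i = sorted_list_of_set B ! (i - a)"
    using lA lB by (simp add: Lst_def nth_append)
  show "\<And>i. b \<le> i \<Longrightarrow> i < n \<Longrightarrow> Lst n A B ! i = sorted_list_of_set ({1..n} - A - B) ! (i - b)"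
    using lA lB ab by (simp add: Lst_def nth_append)
qed

lemma sl_less: "i < j \<Longrightarrow> j < length (sorted_list_of_set X) \<Longrightarrow>
   sorted_list_of_set X ! i < sorted_list_of_set X ! j"
  using sorted_wrt_nth_less[OF strict_sorted_list_of_set] by blast

lemma gperm_TS:
  assumes ab: "a \<le> b" "b \<le> n" and AB: "(A,B) \<in> PS n a b"
  shows "gperm n A B \<in> TS n a b"
proof -
  note F = Lst_facts[OF ab AB]
  let ?L = "Lst n A B"
  have inc: "?L ! (j - 1) < ?L ! j" if "1 \<le> j" "j < n" "j \<noteq> a" "j \<noteq> b" for j
  proof -
    have "j < a \<or> (a < j \<and> j < b) \<or> b < j" using that by linarith
    then consider "j < a" | "a < j" "j < b" | "b < j" by blast
    then show ?thesis
    proof cases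
      case 1 then show ?thesis using F that by (simp add: sl_less)
    next
      case 2
      then have "?L ! (j - 1) = sorted_list_of_set B ! (j - 1 - a)" "?L ! j = sorted_list_of_set B ! (j - a)"
        using F(5) by auto
      then show ?thesis using 2 F(8) sl_less[of "j-1-a" "j-a" B] by simp
    next
      case 3
      then have "?L ! (j - 1) = sorted_list_of_set ({1..n} - A - B) ! (j - 1 - b)"
          "?L ! j = sorted_list_of_set ({1..n} - A - B) ! (j - b)"
        using F(6) that by auto
      then show ?thesis using 3 that F(9) sl_less[of "j-1-b" "j-b" "{1..n} - A - B"] by simp
    qed
  qed
  have des: "descent_set n (gperm n A B) \<subseteq> {a,b}"
  proof
    fix j assume j: "j \<in> descent_set n (gperm n A B)"
    then have j1: "1 \<le> j" "j < n" "gperm n A B j > gperm n A B (Suc j)" by (auto simp: descent_set_def)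
    then have "?L ! (j-1) > ?L ! j" by (simp add: gperm_def)
    then show "j \<in> {a,b}" using inc[of j] j1 by (metis insertCI less_asym)
  qed
  have bij1: "bij_betw (\<lambda>j. j - 1) {1..n} {..<n}"
    by (rule bij_betw_byWitness[where f'=Suc]) auto
  have bij2: "bij_betw ((!) ?L) {..<n} {1..n}"
    using F by (intro bij_betw_nth) auto
  have "bij_betw ((!) ?L \<circ> (\<lambda>j. j - 1)) {1..n} {1..n}"
    using bij_betw_trans[OF bij1 bij2] .
  then have "bij_betw (gperm n A B) {1..n} {1..n}"
    by (rule bij_betw_cong[THEN iffD1, rotated]) (auto simp: gperm_def)
  then have "gperm n A B permutes {1..n}"
    by (rule bij_imp_permutes) (auto simp: gperm_def)
  then show ?thesis using des by (simp add: TS_def)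
qed

lemma img_nth: "k \<le> length xs \<Longrightarrow> (\<lambda>j. xs ! (j - 1 - c)) ` {c+1..c+k} = set (take k xs)"
proof -
  assume k: "k \<le> length xs"
  have "(\<lambda>j. xs ! (j - 1 - c)) ` {c+1..c+k} = (\<lambda>i. xs ! i) ` {..<k}"
  proof (rule set_eqI, rule iffI)
    fix x assume "x \<in> (\<lambda>j. xs ! (j - 1 - c)) ` {c+1..c+k}"
    then obtain j where "j \<in> {c+1..c+k}" "x = xs ! (j - 1 - c)" by auto
    then show "x \<in> (\<lambda>i. xs ! i) ` {..<k}" by (intro rev_image_eqI[of "j - 1 - c"]) auto
  next
    fix x assume "x \<in> (\<lambda>i. xs ! i) ` {..<k}"
    then obtain i where "i < k" "x = xs ! i" by auto
    then show "x \<in> (\<lambda>j. xs ! (j - 1 - c)) ` {c+1..c+k}" by (intro rev_image_eqI[of "i + 1 + c"]) auto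
  qed
  also have "\<dots> = set (take k xs)" using k
    by (auto simp: set_conv_nth image_iff) (metis nth_take)
  finally show ?thesis .
qed

lemma gperm_img:
  assumes ab: "a \<le> b" "b \<le> n" and AB: "(A,B) \<in> PS n a b"
  shows "(gperm n A B ` {1..a}, gperm n A B ` {a+1..b}) = (A, B)"
proof -
  note F = Lst_facts[OF ab AB]
  have fA: "finite A" using AB finite_subset[OF _ finite_atLeastAtMost] by (auto simp: PS_def)
  have fB: "finite B" by (rule finite_subset[of _ "{1..n}"]) (use AB in \<open>auto simp: PS_def\<close>)
  have "gperm n A B ` {1..a} = (\<lambda>j. sorted_list_of_set A ! (j - 1 - 0)) ` {0+1..0+a}"
    using ab F(4) by (intro image_cong) (auto simp: gperm_def)
  also have "\<dots> = A" using img_nth[of a "sorted_list_of_set A" 0] F(7) fA by simp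
  finally have 1: "gperm n A B ` {1..a} = A" .
  have "gperm n A B ` {a+1..b} = (\<lambda>j. sorted_list_of_set B ! (j - 1 - a)) ` {a+1..a+(b-a)}"
    using ab F(5) by (intro image_cong) (auto simp: gperm_def)
  also have "\<dots> = B" using img_nth[of "b-a" "sorted_list_of_set B" a] F(8) fB by simp
  finally show ?thesis using 1 by simp
qed

lemma sorted_map_block:
  assumes "\<And>i. Suc i < k \<Longrightarrow> \<pi> (c + 1 + i) \<le> \<pi> (Suc (c + 1 + i))"
  shows "sorted (map \<pi> [c+1..<c+1+k])"
proof (unfold sorted_iff_nth_Suc, intro allI impI)
  fix i assume "Suc i < length (map \<pi> [c+1..<c+1+k])"
  then have "Suc i < k" by (simp del: upt_Suc)
  then show "map \<pi> [c+1..<c+1+k] ! i \<le> map \<pi> [c+1..<c+1+k] ! Suc i"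
    using assms[of i] by (simp del: upt_Suc add: algebra_simps)
qed

lemma TS_PS:
  assumes ab: "a \<le> b" "b \<le> n" and T: "\<pi> \<in> TS n a b"
  shows "(\<pi> ` {1..a}, \<pi> ` {a+1..b}) \<in> PS n a b"
    and "gperm n (\<pi> ` {1..a}) (\<pi> ` {a+1..b}) = \<pi>"
proof -
  have p: "\<pi> permutes {1..n}" and d: "descent_set n \<pi> \<subseteq> {a,b}" using T by (auto simp: TS_def)
  have inj: "inj_on \<pi> X" for X using permutes_inj_on[OF p] .
  have img: "\<pi> ` {1..n} = {1..n}" using permutes_image[OF p] .
  define A where "A = \<pi> ` {1..a}"
  define B where "B = \<pi> ` {a+1..b}"
  have cA: "card A = a" unfolding A_def using inj by (simp add: card_image)
  have cB: "card B = b - a" unfolding B_def using inj by (simp add: card_image)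
  have sA: "A \<subseteq> {1..n}" unfolding A_def using img ab by auto
  have sB: "B \<subseteq> {1..n} - A" unfolding A_def B_def using img ab
    permutes_inj[OF p] by (auto dest: injD)
  show "(\<pi> ` {1..a}, \<pi> ` {a+1..b}) \<in> PS n a b"
    using cA cB sA sB by (simp add: PS_def A_def B_def)
  have C: "{1..n} - A - B = \<pi> ` {b+1..n}"
  proof -
    have "{1..n} = {1..a} \<union> {a+1..b} \<union> {b+1..n}" using ab by auto
    then have "{1..n} = A \<union> B \<union> \<pi> ` {b+1..n}" using img unfolding A_def B_def
      by (metis image_Un)
    moreover have "A \<inter> \<pi> ` {b+1..n} = {}" "B \<inter> \<pi> ` {b+1..n} = {}"
      unfolding A_def B_def using ab by (auto dest!: injD[OF permutes_inj[OF p]])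
    ultimately show ?thesis by blast
  qed
  have nd: "\<pi> j \<le> \<pi> (Suc j)" if "1 \<le> j" "j < n" "j \<noteq> a" "j \<noteq> b" for j
    using d that by (auto simp: descent_set_def)
  have eq: "map \<pi> [c+1..<c+1+k] = sorted_list_of_set (\<pi> ` {c+1..c+k})"
    if "\<And>i. Suc i < k \<Longrightarrow> \<pi> (c + 1 + i) \<le> \<pi> (Suc (c + 1 + i))" for c k
  proof (rule sorted_distinct_set_unique)
    show "sorted (map \<pi> [c+1..<c+1+k])" using sorted_map_block[OF that] .
    show "distinct (map \<pi> [c+1..<c+1+k])" using inj by (simp add: distinct_map)
    show "set (map \<pi> [c+1..<c+1+k]) = set (sorted_list_of_set (\<pi> ` {c+1..c+k}))"
      by (auto simp: image_iff)
  qed auto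
  have e1: "map \<pi> [0+1..<0+1+a] = sorted_list_of_set A"
    unfolding A_def using eq[of a 0] nd ab by (simp del: upt_Suc)
  have e2: "map \<pi> [a+1..<a+1+(b-a)] = sorted_list_of_set B"
    unfolding B_def using eq[of "b-a" a] nd ab by simp
  have e3: "map \<pi> [b+1..<b+1+(n-b)] = sorted_list_of_set ({1..n} - A - B)"
    unfolding C using eq[of "n-b" b] nd ab by simp
  have ap: "[i..<k] = [i..<j] @ [j..<k]" if "i \<le> j" "j \<le> k" for i j k :: nat
    using upt_add_eq_append[of i j "k - j"] that by simp
  have "[1..<n+1] = [0+1..<0+1+a] @ [a+1..<a+1+(b-a)] @ [b+1..<b+1+(n-b)]"
    using ab ap[of 1 "a+1" "n+1"] ap[of "a+1" "b+1" "n+1"] by (simp del: upt_Suc)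
  then have L: "map \<pi> [1..<n+1] = Lst n A B"
    using e1 e2 e3 by (simp add: Lst_def)
  show "gperm n (\<pi> ` {1..a}) (\<pi> ` {a+1..b}) = \<pi>"
  proof
    fix j
    show "gperm n (\<pi> ` {1..a}) (\<pi> ` {a+1..b}) j = \<pi> j"
    proof (cases "1 \<le> j \<and> j \<le> n")
      case True
      then have "Lst n A B ! (j - 1) = \<pi> j" unfolding L[symmetric] by (subst nth_map) (auto simp del: upt_Suc)
      then show ?thesis using True by (simp add: gperm_def A_def B_def)
    next
      case False
      then show ?thesis using permutes_not_in[OF p, of j] by (auto simp: gperm_def)
    qed
  qed
qed

lemma card_TS:
  assumes ab: "a \<le> b" "b \<le> n"
  shows "card (TS n a b) = (n choose a) * ((n - a) choose (b - a))"
proof -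
  have "bij_betw (\<lambda>\<pi>. (\<pi> ` {1..a}, \<pi> ` {a+1..b})) (TS n a b) (PS n a b)"
  proof (rule bij_betw_byWitness[where f'="\<lambda>(A,B). gperm n A B"])
    show "\<forall>x\<in>TS n a b. (case (x ` {1..a}, x ` {a + 1..b}) of (A, B) \<Rightarrow> gperm n A B) = x"
      using TS_PS(2)[OF ab] by auto
    show "\<forall>y\<in>PS n a b. (\<lambda>x. (x ` {1..a}, x ` {a + 1..b})) ((\<lambda>(A, B). gperm n A B) y) = y"
    proof
      fix y assume "y \<in> PS n a b"
      moreover obtain A B where "y = (A,B)" by fastforce
      ultimately show "(\<lambda>x. (x ` {1..a}, x ` {a + 1..b})) ((\<lambda>(A, B). gperm n A B) y) = y"
        using gperm_img[OF ab, of A B] by simp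
    qed
    show "(\<lambda>x. (x ` {1..a}, x ` {a + 1..b})) ` TS n a b \<subseteq> PS n a b"
      using TS_PS(1)[OF ab] by auto
    show "(\<lambda>(A, B). gperm n A B) ` PS n a b \<subseteq> TS n a b"
      using gperm_TS[OF ab] by auto
  qed
  then have "card (TS n a b) = card (PS n a b)" by (rule bij_betw_same_card)
  also have "PS n a b = Sigma {A. A \<subseteq> {1..n} \<and> card A = a} (\<lambda>A. {B. B \<subseteq> {1..n} - A \<and> card B = b - a})"
    by (auto simp: PS_def)
  also have "card \<dots> = (\<Sum>A\<in>{A. A \<subseteq> {1..n} \<and> card A = a}. card {B. B \<subseteq> {1..n} - A \<and> card B = b - a})"
    by (rule card_SigmaI) (auto intro: finite_subset[of _ "Pow {1..n}"])
  also have "\<dots> = (\<Sum>A\<in>{A. A \<subseteq> {1..n} \<and> card A = a}. (n - a) choose (b - a))"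
  proof (rule sum.cong)
    fix A assume "A \<in> {A. A \<subseteq> {1..n} \<and> card A = a}"
    then have "A \<subseteq> {1..n}" "card A = a" by auto
    moreover have "finite A" using \<open>A \<subseteq> {1..n}\<close> finite_subset by blast
    ultimately have "card ({1..n} - A) = n - a" by (simp add: card_Diff_subset)
    then show "card {B. B \<subseteq> {1..n} - A \<and> card B = b - a} = (n - a) choose (b - a)"
      using n_subsets[of "{1..n} - A" "b - a"] by simp
  qed simp
  also have "\<dots> = (n choose a) * ((n - a) choose (b - a))"
    using n_subsets[of "{1..n}" a] by simp
  finally show ?thesis .
qed

lemma count_formula:
  assumes "1 \<le> l" "l < m" "m < n"
  shows "(of_nat (descent_count {l,m} n) :: complex) =
     of_nat ((n choose l) * ((n - l) choose (m - l))) - of_nat (n choose l) - of_nat (n choose m) + 1"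
proof -
  define E where "E = {\<pi>. \<pi> permutes {1..n} \<and> descent_set n \<pi> = {l,m}}"
  have fin: "finite X" if "X \<subseteq> {\<pi>. \<pi> permutes {1..n}}" for X
    using finite_subset[OF that finite_permutations[of "{1..n}"]] by simp
  have d0: "0 \<notin> descent_set n \<pi>" for \<pi> by (simp add: descent_set_def)
  have U: "TS n l m = E \<union> (TS n l l \<union> TS n m m)"
  proof -
    have "S \<subseteq> {l,m} \<longleftrightarrow> S = {l,m} \<or> S \<subseteq> {l} \<or> S \<subseteq> {m}" for S :: "nat set"
      by auto
    then show ?thesis by (auto simp: TS_def E_def)
  qed
  have D: "E \<inter> (TS n l l \<union> TS n m m) = {}" using assms by (auto simp: TS_def E_def)
  have I: "TS n l l \<inter> TS n m m = TS n 0 0"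
  proof -
    have "S \<subseteq> {l} \<and> S \<subseteq> {m} \<longleftrightarrow> S \<subseteq> {0}" if "0 \<notin> S" for S :: "nat set"
      using that assms by auto
    then show ?thesis using d0 by (auto simp: TS_def)
  qed
  have fE: "finite E" by (rule fin) (auto simp: E_def)
  have fT: "finite (TS n a b)" for a b by (rule fin) (auto simp: TS_def)
  have "card (TS n l m) = card E + card (TS n l l \<union> TS n m m)"
    unfolding U using D fE fT by (simp add: card_Un_disjoint)
  moreover have "card (TS n l l \<union> TS n m m) + card (TS n 0 0) = card (TS n l l) + card (TS n m m)"
    using card_Un_Int[of "TS n l l" "TS n m m"] fT I by simp
  ultimately have "card E + card (TS n l l) + card (TS n m m) = card (TS n l m) + card (TS n 0 0)"
    by simp
  then have "(of_nat (card E) :: complex) + of_nat (card (TS n l l)) + of_nat (card (TS n m m))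
      = of_nat (card (TS n l m)) + of_nat (card (TS n 0 0))"
    by (metis of_nat_add)
  moreover have "card (TS n l l) = n choose l" "card (TS n m m) = n choose m" "card (TS n 0 0) = 1"
    "card (TS n l m) = (n choose l) * ((n - l) choose (m - l))"
    using card_TS assms by auto
  ultimately show ?thesis unfolding descent_count_def E_def[symmetric]
    by (simp add: algebra_simps)
qed

definition Qp :: "nat \<Rightarrow> complex poly" where
  "Qp k = (\<Prod>i<k. smult (1 / of_nat (Suc i)) [:- of_nat i, 1:])"

lemma poly_Qp: "poly (Qp k) z = (\<Prod>i<k. (z - of_nat i) / of_nat (Suc i))"
  unfolding Qp_def poly_prod by (rule prod.cong) (auto simp: diff_divide_distrib)

lemma poly_Qp_gchoose: "poly (Qp k) z = z gchoose k"
proof -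
  have "poly (Qp k) z = (\<Prod>i<k. z - of_nat i) / (\<Prod>i<k. of_nat (Suc i))"
    by (simp add: poly_Qp prod_dividef)
  also have "(\<Prod>i<k. of_nat (Suc i) :: complex) = fact k"
    by (simp add: fact_prod_Suc lessThan_atLeast0)
  finally show ?thesis by (simp add: gbinomial_prod_rev lessThan_atLeast0)
qed

lemma poly_Qp_nat: "poly (Qp k) (of_nat n) = of_nat (n choose k)"
  by (simp add: poly_Qp_gchoose binomial_gbinomial)

definition DP :: "nat \<Rightarrow> nat \<Rightarrow> complex poly" where
  "DP l m = smult (of_nat (m choose l) - 1) (Qp m) - Qp l + 1"

lemma descent_poly_eq:
  assumes "1 \<le> l" "l < m"
  shows "descent_poly {l,m} = DP l m"
proof -
  have M: "Max ({l,m} \<union> {0}) = m" using assms by (auto intro: Max_eqI)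
  have val: "poly (DP l m) (of_nat n) = of_nat (descent_count {l,m} n)" if "n > m" for n
  proof -
    have "(n choose m) * (m choose l) = (n choose l) * ((n - l) choose (m - l))"
      using choose_mult[of l m n] that assms by simp
    then have "(of_nat ((n choose l) * ((n - l) choose (m - l))) :: complex)
        = of_nat (n choose m) * of_nat (m choose l)" by (metis of_nat_mult)
    then show ?thesis using count_formula[OF assms that]
      by (simp add: DP_def poly_Qp_nat algebra_simps)
  qed
  show ?thesis unfolding descent_poly_def M
  proof (rule the_equality)
    show "\<forall>n>m. poly (DP l m) (of_nat n) = of_nat (descent_count {l, m} n)" using val by blast
  next
    fix p :: "complex poly" assume p: "\<forall>n>m. poly p (of_nat n) = of_nat (descent_count {l, m} n)"
    show "p = DP l m"
    proof (rule ccontr)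
      assume "p \<noteq> DP l m"
      then have "p - DP l m \<noteq> 0" by simp
      then have f: "finite {x. poly (p - DP l m) x = 0}" by (rule poly_roots_finite)
      have "of_nat ` {m<..} \<subseteq> {x. poly (p - DP l m) x = 0}"
        using p val by auto
      then have "finite ((of_nat :: nat \<Rightarrow> complex) ` {m<..})" using f finite_subset by blast
      then have "finite {m<..}" by (rule finite_imageD) (simp add: inj_on_def)
      then show False using infinite_Ioi by blast
    qed
  qed
qed

lemma choose_ge: "1 \<le> l \<Longrightarrow> l < m \<Longrightarrow> m \<le> m choose l"
proof (induction m arbitrary: l)
  case 0 then show ?case by simp
next
  case (Suc m)
  show ?case
  proof (cases "l = m")
    case True then show ?thesis by simp
  next
    case False
    then have "l < m" using Suc by simp
    obtain l' where l': "l = Suc l'" using Suc by (cases l) auto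
    have a: "m \<le> m choose Suc l'" using Suc.IH[of l] Suc.prems \<open>l < m\<close> l' by simp
    have b: "0 < m choose l'" using l' \<open>l < m\<close> by (intro zero_less_binomial) simp
    show ?thesis unfolding l' binomial_Suc_Suc using a b by linarith
  qed
qed

lemma prod_gt_1:
  fixes f :: "nat \<Rightarrow> real"
  assumes "finite S" "x \<in> S" "\<And>i. i \<in> S \<Longrightarrow> 1 \<le> f i" "1 < f x"
  shows "1 < prod f S"
proof -
  have "prod f S = f x * prod f (S - {x})" using assms by (simp add: prod.remove)
  moreover have "1 \<le> prod f (S - {x})" using assms by (intro prod_ge_1) auto
  ultimately show ?thesis using assms(4)
    using mult_less_le_imp_less[of 1 "f x" 1 "prod f (S - {x})"] by simp
qed

lemma roots_DP:
  fixes l m :: nat and z :: complex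
  assumes l: "1 \<le> l" "l < m" and z: "poly (DP l m) z = 0"
  shows "\<exists>k<m. cmod (z - of_nat k) \<le> real m"
proof (cases "m = 2")
  case True
  then have l1: "l = 1" using l by simp
  have h: "(z - 1) * z / 2 - z + 1 = 0"
    using z True l1 by (simp add: DP_def poly_Qp numeral_2_eq_2 lessThan_Suc)
  have "2 * ((z - 1) * z / 2) = (z - 1) * z" by simp
  then have "(z - 1) * (z - 2) = 2 * ((z - 1) * z / 2 - z + 1)" by (simp add: algebra_simps)
  then have "(z - 1) * (z - 2) = 0" using h by simp
  then have "z = 1 \<or> z = 2" by auto
  then show ?thesis using True by (intro exI[of _ 0]) auto
next
  case False
  then have m3: "m \<ge> 3" using l by simp
  have c3: "3 \<le> m choose l" using choose_ge[OF l] m3 by simp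
  show ?thesis
  proof (rule ccontr)
    assume "\<not> ?thesis"
    then have big: "\<And>i. i < m \<Longrightarrow> real m < cmod (z - of_nat i)" by (simp add: not_le)
    define r where "r i = cmod (z - of_nat i) / real (Suc i)" for i
    have r1: "1 < r i" if "i < m" for i
    proof -
      have "real (Suc i) \<le> real m" using that by simp
      then have "real (Suc i) < cmod (z - of_nat i)" using big[OF that] by linarith
      then show ?thesis unfolding r_def by simp
    qed
    define X where "X = cmod (poly (Qp l) z)"
    define R where "R = cmod (\<Prod>i\<in>{l..<m}. (z - of_nat i) / of_nat (Suc i))"
    have normq: "cmod ((z - of_nat i) / of_nat (Suc i)) = r i" for i
      unfolding r_def norm_divide norm_of_nat ..
    have X: "X = (\<Prod>i<l. r i)" unfolding X_def poly_Qp
      by (simp add: prod_norm[symmetric] normq del: of_nat_Suc)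
    have R: "R = (\<Prod>i\<in>{l..<m}. r i)" unfolding R_def
      by (simp add: prod_norm[symmetric] normq del: of_nat_Suc)
    have X1: "1 < X" unfolding X using l r1 by (intro prod_gt_1[of _ 0]) (auto intro: less_imp_le)
    have R1: "1 < R" unfolding R using l r1 by (intro prod_gt_1[of _ l]) (auto intro: less_imp_le)
    have split: "{..<m} = {..<l} \<union> {l..<m}" using l by auto
    have Qm: "poly (Qp m) z = poly (Qp l) z * (\<Prod>i\<in>{l..<m}. (z - of_nat i) / of_nat (Suc i))"
      unfolding poly_Qp split by (subst prod.union_disjoint) auto
    have Y: "cmod (poly (Qp m) z) = X * R" unfolding Qm X_def R_def by (simp add: norm_mult)
    have eq: "(of_nat (m choose l) - 1) * poly (Qp m) z = poly (Qp l) z - 1"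
      using z by (simp add: DP_def algebra_simps)
    have nm: "cmod ((of_nat (m choose l) - 1) * poly (Qp m) z) = (real (m choose l) - 1) * (X * R)"
    proof -
      have "(of_nat (m choose l) - 1 :: complex) = of_real (real (m choose l) - 1)" by simp
      then have "cmod (of_nat (m choose l) - 1 :: complex) = real (m choose l) - 1"
        using c3 by (simp only: norm_of_real)
      then show ?thesis by (simp add: norm_mult Y)
    qed
    have cc: "2 \<le> real (m choose l) - 1" using c3 by simp
    have XR: "0 < X * R" using X1 R1 by simp
    have s1: "2 * (X * R) \<le> (real (m choose l) - 1) * (X * R)"
      using mult_right_mono[OF cc, of "X * R"] XR by linarith
    have s2: "cmod (poly (Qp l) z - 1) = (real (m choose l) - 1) * (X * R)"
      using nm by (simp only: eq)
    have s3: "cmod (poly (Qp l) z - 1) \<le> X + 1"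
      using norm_triangle_ineq4[of "poly (Qp l) z" 1] unfolding X_def by simp
    have s4: "X * 1 < X * R" using X1 R1 by (intro mult_strict_left_mono) auto
    show False using s1 s2 s3 s4 X1 by linarith
  qed
qed

theorem theorem4p10:
  fixes l m :: nat and z :: complex
  assumes "1 \<le> l" and "l < m"
    and "poly (descent_poly {l, m}) z = 0"
  shows "\<exists>k<m. cmod (z - of_nat k) \<le> real m"
  using roots_DP[of l m z] assms descent_poly_eq[of l m] by simp

end
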